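(* For every fixed $j\in[0,1]$, the function $c\mapsto g_c(j)$ is increasing on $c>0$, where $$g_c(j)=4\int_0^{c\sqrt{1-j^2}}\frac{\sqrt{(c^2(1-j^2)-z^2)(c^4+(1-c^2)z^2)}}{c(c^2-z^2)}\,dz.$$ Consequently, for $c_1<c_2$ one has $\mathbb{X}_{\Omega_{c_1}}\subset\mathbb{X}_{\Omega_{c_2}}$.
   Context: $\Omega_c\subset\mathbb{R}^2_{\ge0}$ is the relatively open region bounded by the coordinate axes and the curve $(g_c(j),g_c(j)+2\pi j)$, $0\le j\le1$, together with $(g_c(-j)-2\pi j,g_c(-j))$, $-1\le j\le0$. $\mathbb{X}_\Omega=\{(z_1,z_2)\in\mathbb{C}^2:(\pi|z_1|^2,\pi|z_2|^2)\in\Omega\}$. *)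

theory Defs
  imports "HOL-Analysis.Analysis"
begin

text \<open>The function g_c(j) (Henstock-Kurzweil integral; the integrand is nonnegative
  and integrable, with an integrable singularity at the endpoint when j = 0).\<close>
definition gfun :: "real \<Rightarrow> real \<Rightarrow> real" where
  "gfun c j = 4 * integral {0 .. c * sqrt (1 - j\<^sup>2)}
     (\<lambda>z. sqrt ((c\<^sup>2 * (1 - j\<^sup>2) - z\<^sup>2) * (c ^ 4 + (1 - c\<^sup>2) * z\<^sup>2))
            / (c * (c\<^sup>2 - z\<^sup>2)))"

definition curve :: "real \<Rightarrow> (real \<times> real) set" where
  "curve c = (\<lambda>j. (gfun c j, gfun c j + 2 * pi * j)) ` {0..1}
           \<union> (\<lambda>j. (gfun c (-j) - 2 * pi * j, gfun c (-j))) ` {-1..0}"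

definition boundary_omega :: "real \<Rightarrow> (real \<times> real) set" where
  "boundary_omega c = curve c \<union> ({0 .. 2 * pi} \<times> {0}) \<union> ({0} \<times> {0 .. 2 * pi})"

text \<open>Omega_c: the region bounded by the axes and the curve, relatively open in the
  closed quadrant, i.e. the closed region minus the curve.\<close>
definition Omega :: "real \<Rightarrow> (real \<times> real) set" where
  "Omega c = (inside (boundary_omega c) \<union> boundary_omega c) - curve c"

definition toric :: "(real \<times> real) set \<Rightarrow> (complex \<times> complex) set" where
  "toric \<Omega> = {(z1, z2). (pi * (cmod z1)\<^sup>2, pi * (cmod z2)\<^sup>2) \<in> \<Omega>}"

end

theory Submission
  imports Defs
begin

definition kf :: "real \<Rightarrow> real \<Rightarrow> real \<Rightarrow> real" where
  "kf c a t = sqrt (max (a\<^sup>2 - t\<^sup>2) 0) * sqrt (c\<^sup>2 * (1 - t\<^sup>2) + t\<^sup>2) / (1 - t\<^sup>2)"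

definition Gf :: "real \<Rightarrow> real \<Rightarrow> real" where
  "Gf c a = integral {0..<1} (kf c a)"

lemma D_int_Icc: "(\<lambda>t::real. inverse (sqrt (1 - t\<^sup>2))) integrable_on {0..1}"
proof -
  have "((\<lambda>t::real. inverse (sqrt (1 - t\<^sup>2))) has_integral (arcsin 1 - arcsin 0)) {0..1}"
  proof (rule fundamental_theorem_of_calculus_interior)
    show "continuous_on {0..1::real} arcsin"
      by (intro continuous_on_arcsin continuous_on_id) auto
    fix x :: real assume "x \<in> {0<..<1}"
    then show "(arcsin has_vector_derivative inverse (sqrt (1 - x\<^sup>2))) (at x)"
      using DERIV_arcsin[of x] by (simp add: has_real_derivative_iff_has_vector_derivative)
  qed simp
  then show ?thesis by blast
qed

lemma D_int: "(\<lambda>t::real. inverse (sqrt (1 - t\<^sup>2))) integrable_on {0..<1}"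
  by (rule integrable_spike_set[OF D_int_Icc]; rule negligible_subset[of "{1}"]) auto

lemma kf_nonneg:
  assumes "t \<in> {0..<1}" shows "0 \<le> kf c a t"
proof -
  have "0 < 1 - t\<^sup>2" using assms by (simp add: abs_square_less_1)
  then show ?thesis unfolding kf_def by (intro divide_nonneg_pos mult_nonneg_nonneg) auto
qed

lemma kf_bound:
  assumes "t \<in> {0..<1}" "0 \<le> a" "a \<le> 1" "0 < c"
  shows "kf c a t \<le> max c 1 * inverse (sqrt (1 - t\<^sup>2))"
proof -
  define y where "y = 1 - t\<^sup>2"
  define M where "M = max c 1"
  have y: "0 < y" using assms unfolding y_def by (simp add: abs_square_less_1)
  have M: "1 \<le> M" "c \<le> M" unfolding M_def by auto
  have "a\<^sup>2 \<le> 1" using assms by (simp add: power_le_one)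
  then have s1: "sqrt (max (a\<^sup>2 - t\<^sup>2) 0) \<le> sqrt y" unfolding y_def
    using y y_def by (intro real_sqrt_le_mono) auto
  have "c\<^sup>2 * y + t\<^sup>2 \<le> M\<^sup>2 * y + M\<^sup>2 * t\<^sup>2"
  proof (intro add_mono mult_right_mono)
    show "c\<^sup>2 \<le> M\<^sup>2" using M assms
      by (intro power_mono) auto
    show "t\<^sup>2 \<le> M\<^sup>2 * t\<^sup>2" using M by (simp add: mult_le_cancel_right1 one_le_power)
  qed (use y in auto)
  also have "\<dots> = M\<^sup>2" unfolding y_def by (simp add: algebra_simps)
  finally have "sqrt (c\<^sup>2 * y + t\<^sup>2) \<le> M" using M
    by (metis abs_of_nonneg dual_order.trans real_sqrt_abs real_sqrt_le_mono zero_le_one)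
  then have "kf c a t \<le> sqrt y * M / y"
    unfolding kf_def y_def[symmetric] using y s1
    by (intro divide_right_mono mult_mono) auto
  also have "\<dots> = M * inverse (sqrt y)"
    using y by (simp add: field_simps)
  finally show ?thesis unfolding M_def y_def .
qed

lemma kf_cont: "continuous_on {0..<1} (kf c a)"
  unfolding kf_def
  by (intro continuous_intros) (auto simp: power2_eq_1_iff)

lemma kf_int:
  assumes "0 \<le> a" "a \<le> 1" "0 < c"
  shows "kf c a integrable_on {0..<1}"
proof (rule measurable_bounded_by_integrable_imp_integrable)
  show "kf c a \<in> borel_measurable (lebesgue_on {0..<1})"
    by (rule continuous_imp_measurable_on_sets_lebesgue[OF kf_cont]) auto
  show "(\<lambda>t. max c 1 * inverse (sqrt (1 - t\<^sup>2))) integrable_on {0..<1}"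
    using integrable_cmul[OF D_int, of "max c 1"] by simp
  fix t :: real assume "t \<in> {0..<1}"
  then show "norm (kf c a t) \<le> max c 1 * inverse (sqrt (1 - t\<^sup>2))"
    using kf_bound[OF _ assms] kf_nonneg by auto
qed auto

lemma kf_Icc_eq:
  assumes "0 \<le> a" "a \<le> 1"
  shows "integral {0..a} (kf c a) = Gf c a"
proof -
  have "integral {0..a} (kf c a) = integral ({0..a} \<inter> {0..<1}) (kf c a)"
    by (rule integral_spike_set; rule negligible_subset[of "{1}"]) (use assms in auto)
  also have "\<dots> = integral {0..<1} (\<lambda>t. if t \<in> {0..a} then kf c a t else 0)"
    by (rule integral_restrict_Int[symmetric])
  also have "\<dots> = Gf c a"
    unfolding Gf_def
  proof (rule integral_cong)
    fix t :: real assume t: "t \<in> {0..<1}"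
    show "(if t \<in> {0..a} then kf c a t else 0) = kf c a t"
    proof (cases "t \<le> a")
      case False
      then have "a\<^sup>2 \<le> t\<^sup>2" using assms t by (intro power_mono) auto
      then show ?thesis using False by (auto simp: kf_def)
    qed (use t in auto)
  qed
  finally show ?thesis .
qed

lemma gfun_rep:
  assumes c: "0 < c" and j: "j \<in> {0..1}"
  shows "gfun c j = 4 * Gf c (sqrt (1 - j\<^sup>2))"
proof -
  define a where "a = sqrt (1 - j\<^sup>2)"
  have j2: "j\<^sup>2 \<le> 1" using j by (simp add: power_le_one)
  have a: "0 \<le> a" "a \<le> 1" unfolding a_def using j2 by auto
  have a2: "a\<^sup>2 = 1 - j\<^sup>2" unfolding a_def using j2 by simp
  define F where "F = (\<lambda>z. sqrt ((c\<^sup>2 * (1 - j\<^sup>2) - z\<^sup>2) * (c ^ 4 + (1 - c\<^sup>2) * z\<^sup>2))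
            / (c * (c\<^sup>2 - z\<^sup>2)))"
  have img: "(\<lambda>x. x / c) ` {0..c * a} = {0..a}"
  proof
    show "(\<lambda>x. x / c) ` {0..c * a} \<subseteq> {0..a}" using c
      by (auto simp: divide_simps mult.commute)
    show "{0..a} \<subseteq> (\<lambda>x. x / c) ` {0..c * a}"
    proof
      fix x assume "x \<in> {0..a}"
      then show "x \<in> (\<lambda>x. x / c) ` {0..c * a}" using c
        by (intro image_eqI[of _ _ "c * x"]) (auto simp: mult_left_mono)
    qed
  qed
  have "integral {0..a} (\<lambda>x. F (c * x)) = (1 / c) * integral {0..c*a} F"
    using integral_stretch_real[of c 0 "c*a" F] c img by simp
  then have "integral {0..c*a} F = integral {0..a} (\<lambda>x. c * F (c * x))"
    using c by (simp add: field_simps)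
  also have "\<dots> = integral {0..a} (kf c a)"
  proof (rule integral_cong)
    fix t assume t: "t \<in> {0..a}"
    have tt: "t\<^sup>2 \<le> a\<^sup>2" using t by (intro power_mono) auto
    have "c ^ 4 = (c\<^sup>2)\<^sup>2" by simp
    then have c4: "sqrt (c ^ 4) = c\<^sup>2" by (simp only: real_sqrt_abs) simp
    have "(c\<^sup>2 * (1 - j\<^sup>2) - (c*t)\<^sup>2) * (c ^ 4 + (1 - c\<^sup>2) * (c*t)\<^sup>2)
        = (c\<^sup>2)\<^sup>2 * ((a\<^sup>2 - t\<^sup>2) * (c\<^sup>2 * (1 - t\<^sup>2) + t\<^sup>2))"
      unfolding a2 by (simp add: algebra_simps power2_eq_square power4_eq_xxxx)
    then have s1: "sqrt ((c\<^sup>2 * (1 - j\<^sup>2) - (c*t)\<^sup>2) * (c ^ 4 + (1 - c\<^sup>2) * (c*t)\<^sup>2))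
        = c\<^sup>2 * (sqrt (max (a\<^sup>2 - t\<^sup>2) 0) * sqrt (c\<^sup>2 * (1 - t\<^sup>2) + t\<^sup>2))"
      using tt c4 by (simp add: real_sqrt_mult)
    have s2: "c * (c\<^sup>2 - (c*t)\<^sup>2) = c * c\<^sup>2 * (1 - t\<^sup>2)"
      by (simp add: algebra_simps power2_eq_square)
    have "c * F (c * t) = c * (c\<^sup>2 * (sqrt (max (a\<^sup>2 - t\<^sup>2) 0) * sqrt (c\<^sup>2 * (1 - t\<^sup>2) + t\<^sup>2)))
        / (c * c\<^sup>2 * (1 - t\<^sup>2))"
      unfolding F_def by (simp only: s1 s2 times_divide_eq_right)
    also have "\<dots> = (c * c\<^sup>2 * (sqrt (max (a\<^sup>2 - t\<^sup>2) 0) * sqrt (c\<^sup>2 * (1 - t\<^sup>2) + t\<^sup>2)))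
        / (c * c\<^sup>2 * (1 - t\<^sup>2))" by (simp only: times_divide_eq_right mult.assoc)
    also have "\<dots> = kf c a t" unfolding kf_def using c
      by (subst mult_divide_mult_cancel_left) auto
    finally show "c * F (c * t) = kf c a t" .
  qed
  also have "\<dots> = Gf c a" by (rule kf_Icc_eq[OF a])
  finally show ?thesis unfolding gfun_def F_def a_def by simp
qed

lemma Gf_mono:
  assumes "0 < c" "c \<le> c'" "0 \<le> a" "a \<le> 1"
  shows "Gf c a \<le> Gf c' a"
  unfolding Gf_def
proof (rule integral_le)
  show "kf c a integrable_on {0..<1}" "kf c' a integrable_on {0..<1}"
    using assms by (auto intro: kf_int)
  fix t :: real assume t: "t \<in> {0..<1}"
  have y: "0 < 1 - t\<^sup>2" using t by (simp add: abs_square_less_1)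
  have "c\<^sup>2 \<le> c'\<^sup>2" using assms by (intro power_mono) auto
  then have "c\<^sup>2 * (1 - t\<^sup>2) \<le> c'\<^sup>2 * (1 - t\<^sup>2)" using y by (intro mult_right_mono) auto
  then show "kf c a t \<le> kf c' a t" unfolding kf_def using y
    by (intro divide_right_mono mult_left_mono real_sqrt_le_mono) auto
qed

lemma Gf_cont:
  assumes "0 < c"
  shows "continuous_on {0..1} (Gf c)"
proof (rule continuous_on_sequentiallyI)
  fix x :: "nat \<Rightarrow> real" and a
  assume x: "\<forall>n. x n \<in> {0..1}" and a: "a \<in> {0..1}" and lim: "x \<longlonglongrightarrow> a"
  have "(\<lambda>n. integral {0..<1} (kf c (x n))) \<longlonglongrightarrow> integral {0..<1} (kf c a)"
  proof (rule dominated_convergence(2))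
    show "kf c (x n) integrable_on {0..<1}" for n using x assms by (auto intro: kf_int)
    show "(\<lambda>t. max c 1 * inverse (sqrt (1 - t\<^sup>2))) integrable_on {0..<1}"
      using integrable_cmul[OF D_int, of "max c 1"] by simp
    show "norm (kf c (x n) t) \<le> max c 1 * inverse (sqrt (1 - t\<^sup>2))" if "t \<in> {0..<1}" for n t
      using kf_bound[OF that _ _ assms, of "x n"] kf_nonneg[OF that] x by auto
    show "(\<lambda>n. kf c (x n) t) \<longlonglongrightarrow> kf c a t" if "t \<in> {0..<1}" for t
    proof -
      have "1 - t\<^sup>2 \<noteq> 0" using that by (auto simp: power2_eq_1_iff)
      then show ?thesis unfolding kf_def by (intro tendsto_intros lim)
    qed
  qed
  then show "(\<lambda>n. Gf c (x n)) \<longlonglongrightarrow> Gf c a" by (simp add: Gf_def)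
qed

lemma gfun_cont:
  assumes "0 < c"
  shows "continuous_on {0..1} (gfun c)"
proof -
  have "continuous_on {0..1} (\<lambda>j. 4 * Gf c (sqrt (1 - j\<^sup>2)))"
  proof (intro continuous_intros continuous_on_compose2[OF Gf_cont[OF assms]])
    show "(\<lambda>j::real. sqrt (1 - j\<^sup>2)) ` {0..1} \<subseteq> {0..1}"
      by (auto simp: power_le_one)
  qed
  then show ?thesis by (rule continuous_on_cong[THEN iffD1, rotated 2]) (auto simp: gfun_rep[OF assms])
qed

lemma Gf_nonneg: "0 \<le> Gf c a"
  unfolding Gf_def
  by (cases "kf c a integrable_on {0..<1}") (auto intro: integral_nonneg kf_nonneg simp: not_integrable_integral)

lemma gfun_nonneg: "0 < c \<Longrightarrow> j \<in> {0..1} \<Longrightarrow> 0 \<le> gfun c j"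
  using gfun_rep Gf_nonneg by simp

lemma gfun_one: "gfun c 1 = 0"
  unfolding gfun_def by simp


definition Sf :: "real \<Rightarrow> real \<Rightarrow> real" where
  "Sf c d = 2 * gfun c (\<bar>d\<bar> / (2*pi)) + \<bar>d\<bar>"

definition cR :: "real \<Rightarrow> (real \<times> real) set" where
  "cR c = {p. \<bar>snd p - fst p\<bar> \<le> 2*pi \<and> 0 \<le> fst p \<and> 0 \<le> snd p \<and> fst p + snd p \<le> Sf c (snd p - fst p)}"

definition oR :: "real \<Rightarrow> (real \<times> real) set" where
  "oR c = {p. \<bar>snd p - fst p\<bar> < 2*pi \<and> 0 < fst p \<and> 0 < snd p \<and> fst p + snd p < Sf c (snd p - fst p)}"

lemma Sf_cont: assumes "0 < c" shows "continuous_on {-2*pi..2*pi} (Sf c)"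
  unfolding Sf_def
proof (intro continuous_intros continuous_on_compose2[OF gfun_cont[OF assms]])
  show "(\<lambda>d. \<bar>d\<bar> / (2*pi)) ` {-2*pi..2*pi} \<subseteq> {0..1}" by auto
qed auto

lemma Sf_ge: assumes "0 < c" "\<bar>d\<bar> \<le> 2*pi" shows "\<bar>d\<bar> \<le> Sf c d"
  unfolding Sf_def using gfun_nonneg[OF assms(1), of "\<bar>d\<bar> / (2*pi)"] assms by auto

lemma Sf_edge: assumes "\<bar>d\<bar> = 2*pi" shows "Sf c d = 2*pi"
  unfolding Sf_def using assms by (simp add: gfun_one)

lemma Sf_mono: assumes "0 < c" "c \<le> c'" "\<bar>d\<bar> \<le> 2*pi" shows "Sf c d \<le> Sf c' d"
proof -
  define j where "j = \<bar>d\<bar> / (2*pi)"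
  have j: "j \<in> {0..1}" using assms unfolding j_def by auto
  have "j\<^sup>2 \<le> 1" using j by (simp add: power_le_one)
  then have "Gf c (sqrt (1 - j\<^sup>2)) \<le> Gf c' (sqrt (1 - j\<^sup>2))"
    using assms by (intro Gf_mono) auto
  then show ?thesis unfolding Sf_def j_def[symmetric]
    using gfun_rep[OF assms(1) j] gfun_rep[of c' j] j assms by simp
qed

lemma curve_prop:
  assumes "0 < c" "p \<in> curve c"
  shows "\<bar>snd p - fst p\<bar> \<le> 2*pi \<and> 0 \<le> fst p \<and> 0 \<le> snd p \<and> fst p + snd p = Sf c (snd p - fst p)"
  using assms(2) unfolding curve_def
proof (elim UnE imageE)
  fix j :: real assume j: "j \<in> {0..1}" and p: "p = (gfun c j, gfun c j + 2 * pi * j)"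
  have "\<bar>2*pi*j\<bar> / (2*pi) = j" using j by (simp add: abs_mult)
  then show ?thesis using p j gfun_nonneg[OF assms(1) j] by (simp add: Sf_def abs_mult)
next
  fix j :: real assume j: "j \<in> {-1..0}" and p: "p = (gfun c (-j) - 2 * pi * j, gfun c (-j))"
  have j': "-j \<in> {0..1}" using j by auto
  have "\<bar>2*pi*j\<bar> / (2*pi) = -j" using j by (simp add: abs_mult)
  moreover have "\<bar>2*pi*j\<bar> = - (2*pi*j)" using j by (simp add: abs_mult)
  moreover have "pi * (-j) \<le> pi * 1" using j by (intro mult_left_mono) auto
  moreover have "2*pi*j \<le> 0" using j by (simp add: mult_nonneg_nonpos)
  ultimately show ?thesis using p j gfun_nonneg[OF assms(1) j'] by (simp add: Sf_def)
qed

lemma curve_of: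
  assumes "\<bar>y - x\<bar> \<le> 2*pi" "x + y = Sf c (y - x)"
  shows "(x, y) \<in> curve c"
proof (cases "0 \<le> y - x")
  case True
  define j where "j = (y - x) / (2*pi)"
  have j: "j \<in> {0..1}" using True assms unfolding j_def by auto
  have jj: "\<bar>y - x\<bar> / (2*pi) = j" "y - x = 2*pi*j" using True unfolding j_def by auto
  have "(x, y) = (gfun c j, gfun c j + 2 * pi * j)"
    using assms(2) jj True unfolding Sf_def by auto
  then show ?thesis unfolding curve_def using j by blast
next
  case False
  define j where "j = (y - x) / (2*pi)"
  have j: "j \<in> {-1..0}" using False assms unfolding j_def by (auto simp: field_simps)
  have jj: "\<bar>y - x\<bar> / (2*pi) = -j" "y - x = 2*pi*j" using False unfolding j_def by (auto simp: field_simps)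
  have "(x, y) = (gfun c (-j) - 2 * pi * j, gfun c (-j))"
    using assms(2) jj False unfolding Sf_def by auto
  then show ?thesis unfolding curve_def using j by blast
qed

lemma B_sub: assumes "0 < c" shows "boundary_omega c \<subseteq> cR c"
proof
  fix p assume "p \<in> boundary_omega c"
  then consider "p \<in> curve c" | "p \<in> {0 .. 2 * pi} \<times> {0::real}" | "p \<in> {0::real} \<times> {0 .. 2 * pi}"
    unfolding boundary_omega_def by blast
  then show "p \<in> cR c"
  proof cases
    case 1 then show ?thesis using curve_prop[OF assms] unfolding cR_def by auto
  next
    case 2 then show ?thesis using Sf_ge[OF assms, of "snd p - fst p"] unfolding cR_def by auto
  next
    case 3 then show ?thesis using Sf_ge[OF assms, of "snd p - fst p"] unfolding cR_def by auto
  qed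
qed

lemma oR_disj: assumes "0 < c" shows "oR c \<inter> boundary_omega c = {}"
  using curve_prop[OF assms] unfolding oR_def boundary_omega_def by fastforce

lemma oR_sub: "oR c \<subseteq> cR c"
  unfolding oR_def cR_def by auto

lemma diff_sub: assumes "0 < c" shows "cR c - oR c \<subseteq> boundary_omega c"
proof
  fix p assume p: "p \<in> cR c - oR c"
  obtain x y where xy: "p = (x, y)" by force
  have h: "\<bar>y - x\<bar> \<le> 2*pi" "0 \<le> x" "0 \<le> y" "x + y \<le> Sf c (y - x)"
    using p xy unfolding cR_def by auto
  show "p \<in> boundary_omega c"
  proof (cases "x + y = Sf c (y - x)")
    case True then show ?thesis using curve_of[OF h(1) True] xy unfolding boundary_omega_def by auto
  next
    case False
    then have lt: "x + y < Sf c (y - x)" using h by auto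
    have "\<bar>y - x\<bar> \<noteq> 2*pi"
    proof
      assume e: "\<bar>y - x\<bar> = 2*pi"
      then show False using lt Sf_edge[OF e, of c] h by auto
    qed
    then have "x = 0 \<or> y = 0" using p xy lt h unfolding oR_def by auto
    then show ?thesis using h xy unfolding boundary_omega_def by auto
  qed
qed

lemma cR_closed: assumes "0 < c" shows "closed (cR c)"
proof -
  define K where "K = {p::real\<times>real. \<bar>snd p - fst p\<bar> \<le> 2*pi \<and> 0 \<le> fst p \<and> 0 \<le> snd p}"
  have K: "closed K" unfolding K_def
    by (intro closed_Collect_conj closed_Collect_le continuous_intros)
  have "continuous_on K (\<lambda>p. Sf c (snd p - fst p))"
    by (rule continuous_on_compose2[OF Sf_cont[OF assms]]) (auto intro!: continuous_intros simp: K_def)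
  then have "continuous_on K (\<lambda>p. fst p + snd p - Sf c (snd p - fst p))"
    by (intro continuous_intros)
  from continuous_closed_preimage[OF this K, of "{..0}"]
  have "closed (K \<inter> (\<lambda>p. fst p + snd p - Sf c (snd p - fst p)) -` {..0})" by simp
  also have "K \<inter> (\<lambda>p. fst p + snd p - Sf c (snd p - fst p)) -` {..0} = cR c"
    unfolding K_def cR_def by auto
  finally show ?thesis .
qed

lemma oR_open: assumes "0 < c" shows "open (oR c)"
proof -
  define K where "K = {p::real\<times>real. \<bar>snd p - fst p\<bar> < 2*pi \<and> 0 < fst p \<and> 0 < snd p}"
  have K: "open K" unfolding K_def
    by (intro open_Collect_conj open_Collect_less continuous_intros)
  have "continuous_on K (\<lambda>p. Sf c (snd p - fst p))"
    by (rule continuous_on_compose2[OF Sf_cont[OF assms]]) (auto intro!: continuous_intros simp: K_def)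
  then have "continuous_on K (\<lambda>p. fst p + snd p - Sf c (snd p - fst p))"
    by (intro continuous_intros)
  from continuous_open_preimage[OF this K, of "{..<0}"]
  have "open (K \<inter> (\<lambda>p. fst p + snd p - Sf c (snd p - fst p)) -` {..<0})" by simp
  also have "K \<inter> (\<lambda>p. fst p + snd p - Sf c (snd p - fst p)) -` {..<0} = oR c"
    unfolding K_def oR_def by auto
  finally show ?thesis .
qed

lemma cR_bounded: assumes "0 < c" shows "bounded (cR c)"
proof -
  have "compact (Sf c ` {-2*pi..2*pi})"
    by (rule compact_continuous_image[OF Sf_cont[OF assms]]) auto
  then obtain M where M: "\<And>d. d \<in> {-2*pi..2*pi} \<Longrightarrow> \<bar>Sf c d\<bar> \<le> M"
    using compact_imp_bounded bounded_real by (metis image_eqI)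
  have "cR c \<subseteq> cbox (0,0) (M,M)"
  proof
    fix p assume p: "p \<in> cR c"
    then have "\<bar>snd p - fst p\<bar> \<le> 2*pi" unfolding cR_def by auto
    then have "Sf c (snd p - fst p) \<le> M" using M[of "snd p - fst p"] by (auto simp: abs_le_iff)
    then show "p \<in> cbox (0,0) (M,M)"
      using p unfolding cR_def by (cases p) (auto simp: cbox_Pair_eq)
  qed
  then show ?thesis using bounded_cbox bounded_subset by blast
qed

lemma inside_lower: assumes "0 < c" shows "oR c \<subseteq> inside (boundary_omega c)"
proof
  fix p assume p: "p \<in> oR c"
  let ?B = "boundary_omega c"
  let ?C = "connected_component_set (- ?B) p"
  have pB: "p \<notin> ?B" using p oR_disj[OF assms] by auto
  have pC: "p \<in> ?C" using pB by (simp add: connected_component_refl)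
  have CB: "?C \<subseteq> - ?B" by (rule connected_component_subset)
  have "?C \<subseteq> oR c"
  proof (rule ccontr)
    assume "\<not> ?C \<subseteq> oR c"
    then have "?C - oR c \<noteq> {}" by auto
    moreover have "?C \<inter> oR c \<noteq> {}" using pC p by blast
    ultimately have "?C \<inter> frontier (oR c) \<noteq> {}"
      by (intro connected_Int_frontier) auto
    then obtain r where r: "r \<in> ?C" "r \<in> frontier (oR c)" by auto
    have "closure (oR c) \<subseteq> cR c"
      by (rule closure_minimal[OF oR_sub cR_closed[OF assms]])
    then have "r \<in> cR c - oR c"
      using r(2) interior_open[OF oR_open[OF assms]] unfolding frontier_def by auto
    then have "r \<in> ?B" using diff_sub[OF assms] by auto
    then show False using r(1) CB by auto
  qed
  then have "bounded ?C"
    using bounded_subset[OF cR_bounded[OF assms]] oR_sub by blast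
  then show "p \<in> inside ?B" unfolding inside_def using pB by auto
qed

lemma ray_unbounded:
  assumes "0 < c" "v \<noteq> 0" "\<And>t. 0 \<le> t \<Longrightarrow> p + t *\<^sub>R v \<notin> cR c"
  shows "p \<notin> inside (boundary_omega c)"
proof
  assume pin: "p \<in> inside (boundary_omega c)"
  let ?B = "boundary_omega c"
  let ?C = "connected_component_set (- ?B) p"
  define R where "R = (\<lambda>t. p + t *\<^sub>R v) ` {0..}"
  have cR': "connected R" unfolding R_def
    by (intro connected_continuous_image continuous_intros) auto
  have pR: "p \<in> R" unfolding R_def by (rule image_eqI[of _ _ 0]) auto
  have RB: "R \<subseteq> - ?B" using assms(3) B_sub[OF assms(1)] unfolding R_def by auto
  have "R \<subseteq> ?C" by (rule connected_component_maximal[OF pR cR' RB])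
  moreover have "bounded ?C" using pin unfolding inside_def by auto
  ultimately have "bounded R" by (rule bounded_subset[rotated])
  then obtain M where M: "\<And>x. x \<in> R \<Longrightarrow> norm x \<le> M" by (auto simp: bounded_iff)
  define t where "t = (\<bar>M\<bar> + norm p + 1) / norm v"
  have nv: "0 < norm v" using assms by auto
  have t: "0 \<le> t" unfolding t_def using nv by auto
  have "norm (t *\<^sub>R v) \<le> norm (p + t *\<^sub>R v) + norm p"
    by (metis add_diff_cancel_left' norm_triangle_ineq4 add.commute)
  moreover have "norm (t *\<^sub>R v) = \<bar>M\<bar> + norm p + 1" unfolding t_def using nv by simp
  moreover have "p + t *\<^sub>R v \<in> R" using t unfolding R_def by auto
  then have "norm (p + t *\<^sub>R v) \<le> M" by (rule M)
  ultimately show False by linarith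
qed

lemma inside_upper: assumes "0 < c" shows "inside (boundary_omega c) \<subseteq> cR c"
proof
  fix p assume pin: "p \<in> inside (boundary_omega c)"
  obtain x y where xy: "p = (x, y)" by force
  show "p \<in> cR c"
  proof (rule ccontr)
    assume np: "p \<notin> cR c"
    consider "x < 0" | "0 \<le> x" "y < 0" | "0 \<le> x" "0 \<le> y" "y - x > 2*pi"
      | "0 \<le> x" "0 \<le> y" "y - x < -2*pi"
      | "0 \<le> x" "0 \<le> y" "\<bar>y - x\<bar> \<le> 2*pi" "x + y > Sf c (y - x)"
      using np xy unfolding cR_def by force
    then show False
    proof cases
      case 1
      have "p \<notin> inside (boundary_omega c)"
        by (rule ray_unbounded[OF assms, of "(-1,0)"]) (use 1 xy in \<open>auto simp: cR_def zero_prod_def\<close>)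
      then show False using pin by auto
    next
      case 2
      have "p \<notin> inside (boundary_omega c)"
        by (rule ray_unbounded[OF assms, of "(0,-1)"]) (use 2 xy in \<open>auto simp: cR_def zero_prod_def\<close>)
      then show False using pin by auto
    next
      case 3
      have "p \<notin> inside (boundary_omega c)"
        by (rule ray_unbounded[OF assms, of "(0,1)"]) (use 3 xy in \<open>auto simp: cR_def zero_prod_def\<close>)
      then show False using pin by auto
    next
      case 4
      have "p \<notin> inside (boundary_omega c)"
        by (rule ray_unbounded[OF assms, of "(1,0)"]) (use 4 xy in \<open>auto simp: cR_def zero_prod_def\<close>)
      then show False using pin by auto
    next
      case 5
      have "p \<notin> inside (boundary_omega c)"
        by (rule ray_unbounded[OF assms, of "(1,1)"]) (use 5 xy in \<open>auto simp: cR_def zero_prod_def\<close>)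
      then show False using pin by auto
    qed
  qed
qed

lemma Omega_mono:
  assumes "0 < c1" "c1 \<le> c2"
  shows "Omega c1 \<subseteq> Omega c2"
proof
  fix p assume p: "p \<in> Omega c1"
  have c2: "0 < c2" using assms by auto
  obtain x y where xy: "p = (x, y)" by force
  have pc: "p \<in> cR c1" using p inside_upper[OF assms(1)] B_sub[OF assms(1)] unfolding Omega_def by auto
  have nc: "p \<notin> curve c1" using p unfolding Omega_def by auto
  have h: "\<bar>y - x\<bar> \<le> 2*pi" "0 \<le> x" "0 \<le> y" "x + y \<le> Sf c1 (y - x)"
    using pc xy unfolding cR_def by auto
  have lt: "x + y < Sf c1 (y - x)" using h nc curve_of[OF h(1)] xy by force
  have ne: "\<bar>y - x\<bar> \<noteq> 2*pi"
  proof
    assume e: "\<bar>y - x\<bar> = 2*pi"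
    then show False using lt Sf_edge[OF e, of c1] h by auto
  qed
  have lt2: "x + y < Sf c2 (y - x)" using lt Sf_mono[OF assms h(1)] by auto
  have "p \<notin> curve c2" using curve_prop[OF c2] lt2 xy by force
  moreover have "p \<in> inside (boundary_omega c2) \<union> boundary_omega c2"
  proof (cases "0 < x \<and> 0 < y")
    case True
    then have "p \<in> oR c2" using h ne lt2 xy unfolding oR_def by auto
    then show ?thesis using inside_lower[OF c2] by auto
  next
    case False
    then have "x = 0 \<or> y = 0" using h by auto
    then show ?thesis using h xy unfolding boundary_omega_def by auto
  qed
  ultimately show "p \<in> Omega c2" unfolding Omega_def by auto
qed

theorem mainTheorem13:
  shows "(\<forall>j \<in> {0..1}. mono_on {0<..} (\<lambda>c. gfun c j))
       \<and> (\<forall>c1 c2. 0 < c1 \<longrightarrow> c1 < c2 \<longrightarrow> toric (Omega c1) \<subseteq> toric (Omega c2))"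
proof (intro conjI ballI allI impI)
  fix j :: real assume j: "j \<in> {0..1}"
  have "j\<^sup>2 \<le> 1" using j by (simp add: power_le_one)
  then show "mono_on {0<..} (\<lambda>c. gfun c j)"
    using j by (intro mono_onI) (auto simp: gfun_rep intro!: Gf_mono)
next
  fix c1 c2 :: real assume "0 < c1" "c1 < c2"
  then have "Omega c1 \<subseteq> Omega c2" by (intro Omega_mono) auto
  then show "toric (Omega c1) \<subseteq> toric (Omega c2)" unfolding toric_def by auto
qed

end
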